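(* Let $N\ge 0$ be an integer and let $|\psi\rangle=\sum_{n=0}^N a_n|n\rangle$ be a normalized single-mode state ($\sum_n|a_n|^2=1$) supported on Fock states with at most $N$ photons. Then $|\psi\rangle$ has approximate coherent rank at most $N+1$. Explicitly, for a nonzero real parameter $\epsilon$, set $$c_k=\frac{e^{\epsilon^2/2}}{N+1}\sum_{n=0}^N \sqrt{n!}\,\frac{a_n}{\epsilon^n}\,e^{-2\pi i nk/(N+1)},\qquad k=0,\dots,N,$$ and $$|\tilde\psi\rangle=\frac{1}{\sqrt{\mathcal N}}\sum_{k=0}^N c_k\,\big|\epsilon e^{2\pi i k/(N+1)}\big\rangle ,$$ where $\mathcal N$ is the squared norm of $\sum_{k=0}^N c_k|\epsilon e^{2\pi i k/(N+1)}\rangle$ (so that $|\tilde\psi\rangle$ is normalized). Then $\mathcal N=1+O\!\left(\epsilon^{2(N+1)}/(N+1)!\right)$ as $\epsilon\to 0$, and the fidelity satisfies $|\langle\psi|\tilde\psi\rangle|^2=1/\mathcal N$; in particular the fidelity can be made arbitrarily close to $1$ by taking $\epsilon$ small.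
   Context: Single-mode Hilbert space with Fock (number) basis $\{|n\rangle\}_{n\ge0}$. For $\alpha\in\mathbb C$, the coherent state is $|\alpha\rangle=e^{-|\alpha|^2/2}\sum_{n=0}^\infty\frac{\alpha^n}{\sqrt{n!}}|n\rangle$ (Greek letters inside kets denote coherent states, Latin letters Fock states). A state has coherent rank $k$ if it can be written as $\sum_{i=1}^k c_i|\alpha_i^{(1)},\dots,\alpha_i^{(m)}\rangle$, a superposition of $k$ (multi-mode product) coherent states. The approximate coherent rank of a state $|\psi\rangle$ is the smallest integer $k$ such that for every $\delta>0$ there is a state $|\tilde\psi\rangle$ of coherent rank $k$ with $|\langle\psi|\tilde\psi\rangle|^2>1-\delta$. *)

theory Defs
  imports "HOL-Analysis.Analysis" "HOL-Library.Landau_Symbols"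
begin

text \<open>Single-mode states are represented by their Fock-basis amplitudes
  \<open>nat \<Rightarrow> complex\<close> (component n = amplitude of the Fock state |n>).\<close>

definition coherent :: "complex \<Rightarrow> nat \<Rightarrow> complex" where
  "coherent \<alpha> n = complex_of_real (exp (- (cmod \<alpha>)\<^sup>2 / 2)) * \<alpha> ^ n / complex_of_real (sqrt (fact n))"

definition braket :: "(nat \<Rightarrow> complex) \<Rightarrow> (nat \<Rightarrow> complex) \<Rightarrow> complex" where
  "braket \<phi> \<psi> = infsum (\<lambda>n. cnj (\<phi> n) * \<psi> n) UNIV"

definition sqnorm :: "(nat \<Rightarrow> complex) \<Rightarrow> real" where
  "sqnorm \<phi> = infsum (\<lambda>n. (cmod (\<phi> n))\<^sup>2) UNIV"

definition is_state :: "(nat \<Rightarrow> complex) \<Rightarrow> bool" where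
  "is_state \<phi> \<longleftrightarrow> (\<lambda>n. (cmod (\<phi> n))\<^sup>2) summable_on UNIV \<and> sqnorm \<phi> = 1"

definition fidelity :: "(nat \<Rightarrow> complex) \<Rightarrow> (nat \<Rightarrow> complex) \<Rightarrow> real" where
  "fidelity \<psi> \<phi> = (cmod (braket \<psi> \<phi>))\<^sup>2"

definition has_coherent_rank :: "nat \<Rightarrow> (nat \<Rightarrow> complex) \<Rightarrow> bool" where
  "has_coherent_rank k \<phi> \<longleftrightarrow>
     (\<exists>c \<alpha> :: nat \<Rightarrow> complex. \<phi> = (\<lambda>n. \<Sum>i<k. c i * coherent (\<alpha> i) n))"

definition approx_coherent_rank :: "(nat \<Rightarrow> complex) \<Rightarrow> nat" where
  "approx_coherent_rank \<psi> = (LEAST k. \<forall>\<delta>>0. \<exists>\<phi>. has_coherent_rank k \<phi> \<and> is_state \<phi> \<and>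
      fidelity \<psi> \<phi> > 1 - \<delta>)"

definition coeff_c :: "nat \<Rightarrow> (nat \<Rightarrow> complex) \<Rightarrow> real \<Rightarrow> nat \<Rightarrow> complex" where
  "coeff_c N a \<epsilon> k = complex_of_real (exp (\<epsilon>\<^sup>2 / 2) / real (N + 1)) *
     (\<Sum>n\<le>N. complex_of_real (sqrt (fact n)) * a n / complex_of_real (\<epsilon> ^ n)
        * exp (- 2 * pi * \<i> * of_nat n * of_nat k / of_nat (N + 1)))"

definition approx_unnorm :: "nat \<Rightarrow> (nat \<Rightarrow> complex) \<Rightarrow> real \<Rightarrow> nat \<Rightarrow> complex" where
  "approx_unnorm N a \<epsilon> = (\<lambda>m. \<Sum>k\<le>N. coeff_c N a \<epsilon> k *
     coherent (complex_of_real \<epsilon> * exp (2 * pi * \<i> * of_nat k / of_nat (N + 1))) m)"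

definition normN :: "nat \<Rightarrow> (nat \<Rightarrow> complex) \<Rightarrow> real \<Rightarrow> real" where
  "normN N a \<epsilon> = sqnorm (approx_unnorm N a \<epsilon>)"

definition approx_state :: "nat \<Rightarrow> (nat \<Rightarrow> complex) \<Rightarrow> real \<Rightarrow> nat \<Rightarrow> complex" where
  "approx_state N a \<epsilon> = (\<lambda>m. approx_unnorm N a \<epsilon> m / complex_of_real (sqrt (normN N a \<epsilon>)))"

end

theory Submission
  imports Defs
begin

lemma roots_sum:
  fixes M :: nat and j :: int
  assumes "M > 0"
  shows "(\<Sum>k<M. exp (2 * pi * \<i> * of_nat k * of_int j / of_nat M)) = (if int M dvd j then of_nat M else 0)"
proof -
  define z where "z = exp (2 * pi * \<i> * of_int j / of_nat M)"
  have t: "exp (2 * pi * \<i> * of_nat k * of_int j / of_nat M) = z ^ k" for k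
    unfolding z_def exp_of_nat_mult[symmetric] by (simp add: mult_ac)
  have zM: "z ^ M = 1"
  proof -
    have "z ^ M = exp (of_nat M * (2 * pi * \<i> * of_int j / of_nat M))"
      unfolding z_def exp_of_nat_mult by simp
    also have "\<dots> = exp ((2 * of_int j * pi) * \<i>)" using assms by (simp add: field_simps)
    also have "\<dots> = 1" by (rule exp_integer_2pi) simp
    finally show ?thesis .
  qed
  show ?thesis
  proof (cases "int M dvd j")
    case True
    then obtain t where jt: "j = int M * t" by (auto elim: dvdE)
    have "z = exp ((2 * of_int t * pi) * \<i>)" unfolding z_def jt using assms by (simp add: field_simps)
    also have "\<dots> = 1" by (rule exp_integer_2pi) simp
    finally have "z = 1" .
    then show ?thesis using True unfolding t by simp
  next
    case False
    have "z \<noteq> 1"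
    proof
      assume "z = 1"
      then obtain n :: int where n: "Im (2 * pi * \<i> * of_int j / of_nat M) = of_int (2 * n) * pi"
        unfolding z_def exp_eq_1 by blast
      hence "2 * pi * of_int j / of_nat M = of_int (2 * n) * pi" by simp
      hence "real_of_int j = of_int n * of_nat M" using assms by (simp add: field_simps)
      hence "j = n * int M" by (metis of_int_eq_iff of_int_mult of_int_of_nat_eq)
      thus False using False by simp
    qed
    then show ?thesis using False unfolding t by (simp add: sum_gp_strict zM)
  qed
qed

lemma dvd_iff_mod:
  fixes M m n :: nat
  assumes "n < M"
  shows "int M dvd (int m - int n) \<longleftrightarrow> n = m mod M"
proof -
  have "int M dvd (int m - int n) \<longleftrightarrow> int m mod int M = int n mod int M"
    by (simp add: mod_eq_dvd_iff)
  also have "\<dots> \<longleftrightarrow> m mod M = n mod M" by (metis of_nat_eq_iff zmod_int)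
  also have "\<dots> \<longleftrightarrow> n = m mod M" using assms by auto
  finally show ?thesis .
qed

lemma coherent_root:
  fixes \<epsilon> :: real and M k m :: nat
  shows "coherent (complex_of_real \<epsilon> * exp (2 * pi * \<i> * of_nat k / of_nat M)) m =
    complex_of_real (exp (- \<epsilon>\<^sup>2 / 2) * \<epsilon> ^ m / sqrt (fact m)) * exp (2 * pi * \<i> * of_nat k * of_nat m / of_nat M)"
proof -
  have re: "Re (2 * pi * \<i> * of_nat k / of_nat M) = 0" by simp
  have n: "cmod (complex_of_real \<epsilon> * exp (2 * pi * \<i> * of_nat k / of_nat M)) = \<bar>\<epsilon>\<bar>"
    by (simp only: norm_mult norm_exp_eq_Re re) simp
  have p: "exp (2 * pi * \<i> * of_nat k / of_nat M) ^ m = exp (2 * pi * \<i> * of_nat k * of_nat m / of_nat M)"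
    unfolding exp_of_nat_mult[symmetric] by (simp add: mult_ac)
  show ?thesis unfolding coherent_def n power_mult_distrib p by simp
qed


lemma approx_formula:
  fixes \<epsilon> :: real
  assumes "\<epsilon> \<noteq> 0"
  shows "approx_unnorm N a \<epsilon> m = complex_of_real (\<epsilon> ^ m / sqrt (fact m) * sqrt (fact (m mod (N+1))) / \<epsilon> ^ (m mod (N+1))) * a (m mod (N+1))"
proof -
  define M where "M = N + 1"
  define r where "r = m mod M"
  define A where "A = complex_of_real (exp (\<epsilon>\<^sup>2 / 2) / real (N + 1))"
  define B where "B n = complex_of_real (sqrt (fact n)) * a n / complex_of_real (\<epsilon> ^ n)" for n
  define P where "P = complex_of_real (exp (- \<epsilon>\<^sup>2 / 2) * \<epsilon> ^ m / sqrt (fact m))"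
  define e where "e x = exp (2 * pi * \<i> * x / of_nat M)" for x
  have rle: "r \<le> N" unfolding r_def M_def using mod_less_divisor[of "N+1" m] by linarith
  have c: "coeff_c N a \<epsilon> k = A * (\<Sum>n\<le>N. B n * e (- (of_nat n * of_nat k)))" for k
    unfolding coeff_c_def A_def B_def e_def M_def by (simp add: mult_ac)
  have co: "coherent (complex_of_real \<epsilon> * exp (2 * pi * \<i> * of_nat k / of_nat (N + 1))) m = P * e (of_nat k * of_nat m)" for k
    unfolding coherent_root P_def e_def M_def by (simp add: mult_ac)
  have eadd: "e x * e y = e (x + y)" for x y
    unfolding e_def exp_add[symmetric] by (simp add: ring_distribs add_divide_distrib)
  have ee: "e (- (of_nat n * of_nat k)) * e (of_nat k * of_nat m) = exp (2 * pi * \<i> * of_nat k * of_int (int m - int n) / of_nat M)" for n k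
  proof -
    have "- (of_nat n * of_nat k) + of_nat k * of_nat m = (of_nat k * of_int (int m - int n) :: complex)"
      by (simp add: algebra_simps)
    then show ?thesis unfolding eadd by (simp add: e_def mult.assoc)
  qed
  have "approx_unnorm N a \<epsilon> m = (\<Sum>k\<le>N. A * (\<Sum>n\<le>N. B n * e (- (of_nat n * of_nat k))) * (P * e (of_nat k * of_nat m)))"
    unfolding approx_unnorm_def c co ..
  also have "\<dots> = A * P * (\<Sum>n\<le>N. B n * (\<Sum>k\<le>N. e (- (of_nat n * of_nat k)) * e (of_nat k * of_nat m)))"
  proof -
    have "(\<Sum>k\<le>N. A * (\<Sum>n\<le>N. B n * e (- (of_nat n * of_nat k))) * (P * e (of_nat k * of_nat m)))
       = (\<Sum>k\<le>N. \<Sum>n\<le>N. A * P * (B n * (e (- (of_nat n * of_nat k)) * e (of_nat k * of_nat m))))"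
      by (rule sum.cong[OF refl]) (simp add: sum_distrib_left sum_distrib_right mult_ac)
    also have "\<dots> = (\<Sum>n\<le>N. \<Sum>k\<le>N. A * P * (B n * (e (- (of_nat n * of_nat k)) * e (of_nat k * of_nat m))))"
      by (rule sum.swap)
    also have "\<dots> = A * P * (\<Sum>n\<le>N. B n * (\<Sum>k\<le>N. e (- (of_nat n * of_nat k)) * e (of_nat k * of_nat m)))"
      by (simp add: sum_distrib_left)
    finally show ?thesis .
  qed
  also have "\<dots> = A * P * (\<Sum>n\<le>N. B n * (if n = r then of_nat M else 0))"
  proof -
    have "(\<Sum>k\<le>N. e (- (of_nat n * of_nat k)) * e (of_nat k * of_nat m)) = (if n = r then of_nat M else 0)" if "n \<le> N" for n
    proof -
      have "(\<Sum>k\<le>N. e (- (of_nat n * of_nat k)) * e (of_nat k * of_nat m)) = (\<Sum>k<M. exp (2 * pi * \<i> * of_nat k * of_int (int m - int n) / of_nat M))"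
        unfolding ee M_def using lessThan_Suc_atMost by simp
      also have "\<dots> = (if int M dvd (int m - int n) then of_nat M else 0)"
        by (rule roots_sum) (simp add: M_def)
      also have "\<dots> = (if n = r then of_nat M else 0)"
        using dvd_iff_mod[of n M m] that unfolding r_def M_def by simp
      finally show ?thesis .
    qed
    then show ?thesis by (intro arg_cong2[where f="(*)"] refl sum.cong) auto
  qed
  also have "\<dots> = A * P * B r * of_nat M"
    using rle by (simp add: sum.delta' if_distrib[of "(*) _"] cong: if_cong)
  also have "\<dots> = complex_of_real (\<epsilon> ^ m / sqrt (fact m) * sqrt (fact r) / \<epsilon> ^ r) * a r"
  proof -
    have "exp (\<epsilon>\<^sup>2 / 2) / real (N + 1) * real (N + 1) = exp (\<epsilon>\<^sup>2 / 2)" by simp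
    then have AM: "A * of_nat M = complex_of_real (exp (\<epsilon>\<^sup>2 / 2))"
      unfolding A_def M_def by (metis of_real_mult of_real_of_nat_eq)
    have "exp (\<epsilon>\<^sup>2 / 2) * (exp (- \<epsilon>\<^sup>2 / 2) * \<epsilon> ^ m / sqrt (fact m)) = \<epsilon> ^ m / sqrt (fact m)"
      by (simp add: exp_minus field_simps)
    then have EP: "complex_of_real (exp (\<epsilon>\<^sup>2 / 2)) * P = complex_of_real (\<epsilon> ^ m / sqrt (fact m))"
      unfolding P_def by (metis of_real_mult)
    have "A * P * B r * of_nat M = (A * of_nat M * P) * B r" by (simp add: mult_ac)
    also have "\<dots> = complex_of_real (\<epsilon> ^ m / sqrt (fact m)) * B r" unfolding AM EP ..
    also have "\<dots> = complex_of_real (\<epsilon> ^ m / sqrt (fact m) * sqrt (fact r) / \<epsilon> ^ r) * a r"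
      unfolding B_def using assms by (simp add: field_simps)
    finally show ?thesis .
  qed
  finally show ?thesis unfolding r_def M_def .
qed


lemma approx_low:
  assumes "\<epsilon> \<noteq> 0" "m \<le> N"
  shows "approx_unnorm N a \<epsilon> m = a m"
proof -
  have "m mod (N+1) = m" using assms by simp
  moreover have "sqrt (fact m) \<noteq> 0" by simp
  ultimately show ?thesis unfolding approx_formula[OF assms(1)] using assms(1) by simp
qed

lemma approx_sq:
  fixes \<epsilon> :: real and N m :: nat and a :: "nat \<Rightarrow> complex"
  assumes "\<epsilon> \<noteq> 0"
  defines "r \<equiv> m mod (N+1)"
  shows "(cmod (approx_unnorm N a \<epsilon> m))\<^sup>2 = (\<epsilon>\<^sup>2) ^ m / fact m * (fact r / (\<epsilon>\<^sup>2) ^ r * (cmod (a r))\<^sup>2)"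
proof -
  have "(cmod (approx_unnorm N a \<epsilon> m))\<^sup>2 = (\<epsilon> ^ m / sqrt (fact m) * sqrt (fact r) / \<epsilon> ^ r)\<^sup>2 * (cmod (a r))\<^sup>2"
    unfolding approx_formula[OF assms(1)] r_def norm_mult norm_of_real power_mult_distrib power2_abs ..
  also have "\<dots> = (\<epsilon>\<^sup>2) ^ m / fact m * (fact r / (\<epsilon>\<^sup>2) ^ r * (cmod (a r))\<^sup>2)"
  proof -
    have p: "(\<epsilon> ^ k)\<^sup>2 = (\<epsilon>\<^sup>2) ^ k" for k by (metis power_mult mult.commute)
    show ?thesis by (simp add: power_divide power_mult_distrib p)
  qed
  finally show ?thesis .
qed

lemma fact_bound:
  fixes r m N :: nat
  assumes "r \<le> N" "N < m"
  shows "fact r / fact m \<le> (1 / fact (m - N) :: real)"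
proof -
  have "fact r * fact (m - r) * (m choose r) = (fact m :: nat)"
    using assms by (intro binomial_fact_lemma) simp
  moreover have "m choose r > 0" using assms by simp
  ultimately have "fact r * fact (m - r) \<le> (fact m :: nat)"
    by (metis le_add1 mult_le_mono2 mult.right_neutral Suc_le_eq nat_mult_1_right One_nat_def)
  moreover have "fact (m - N) \<le> (fact (m - r) :: nat)" using assms by (intro fact_mono) simp
  ultimately have "fact r * fact (m - N) \<le> (fact m :: nat)"
    by (meson dual_order.trans mult_le_mono2)
  then have "real (fact r * fact (m - N)) \<le> real (fact m)" by (simp only: of_nat_le_iff)
  then have "fact r * fact (m - N) \<le> (fact m :: real)" by simp
  then show ?thesis by (simp add: field_simps)
qed


lemma summable_F:
  fixes \<epsilon> :: real
  assumes "\<epsilon> \<noteq> 0"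
  shows "(\<lambda>m. (cmod (approx_unnorm N a \<epsilon> m))\<^sup>2) summable_on UNIV"
proof -
  define K where "K = (\<Sum>r\<le>N. fact r / (\<epsilon>\<^sup>2) ^ r * (cmod (a r))\<^sup>2)"
  have "summable (\<lambda>m. inverse (fact m) * (\<epsilon>\<^sup>2) ^ m * K)"
    by (intro summable_mult2 summable_exp)
  then have "(\<lambda>m. inverse (fact m) * (\<epsilon>\<^sup>2) ^ m * K) summable_on UNIV"
  proof (subst summable_on_UNIV_nonneg_real_iff)
    have K0: "0 \<le> K" unfolding K_def by (intro sum_nonneg) auto
    then show "0 \<le> inverse (fact m) * (\<epsilon>\<^sup>2) ^ m * K" for m by simp
  qed
  then show ?thesis
  proof (rule summable_on_comparison_test)
    fix m :: nat
    define r where "r = m mod (N+1)"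
    have rle: "r \<le> N" unfolding r_def using mod_less_divisor[of "N+1" m] by linarith
    have "fact r / (\<epsilon>\<^sup>2) ^ r * (cmod (a r))\<^sup>2 \<le> K"
      unfolding K_def using rle by (intro member_le_sum) auto
    then have "(\<epsilon>\<^sup>2) ^ m / fact m * (fact r / (\<epsilon>\<^sup>2) ^ r * (cmod (a r))\<^sup>2) \<le> (\<epsilon>\<^sup>2) ^ m / fact m * K"
      by (rule mult_left_mono) simp
    then show "(cmod (approx_unnorm N a \<epsilon> m))\<^sup>2 \<le> inverse (fact m) * (\<epsilon>\<^sup>2) ^ m * K"
      unfolding approx_sq[OF assms] r_def[symmetric]
      by (simp add: divide_inverse mult_ac)
  qed simp
qed

lemma norm_split:
  fixes \<epsilon> :: real
  assumes "\<epsilon> \<noteq> 0" and normalized: "(\<Sum>n\<le>N. (cmod (a n))\<^sup>2) = 1"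
  shows "normN N a \<epsilon> = 1 + infsum (\<lambda>m. (cmod (approx_unnorm N a \<epsilon> m))\<^sup>2) {N<..}"
proof -
  let ?F = "\<lambda>m. (cmod (approx_unnorm N a \<epsilon> m))\<^sup>2"
  have S: "?F summable_on UNIV" by (rule summable_F[OF assms(1)])
  have U: "(UNIV :: nat set) = {..N} \<union> {N<..}" by auto
  have "normN N a \<epsilon> = infsum ?F ({..N} \<union> {N<..})"
    unfolding normN_def sqnorm_def U[symmetric] ..
  also have "\<dots> = infsum ?F {..N} + infsum ?F {N<..}"
    by (intro infsum_Un_disjoint summable_on_subset[OF S]) auto
  also have "infsum ?F {..N} = (\<Sum>n\<le>N. (cmod (a n))\<^sup>2)"
    using approx_low[OF assms(1)] by simp
  finally show ?thesis using normalized by simp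
qed

lemma tail_bound:
  fixes \<epsilon> :: real
  assumes "\<epsilon> \<noteq> 0" "\<bar>\<epsilon>\<bar> \<le> 1" and normalized: "(\<Sum>n\<le>N. (cmod (a n))\<^sup>2) = 1"
  shows "infsum (\<lambda>m. (cmod (approx_unnorm N a \<epsilon> m))\<^sup>2) {N<..}
     \<le> (\<epsilon>\<^sup>2) ^ (N+1) * infsum (\<lambda>m. 1 / fact (m - N)) {N<..}"
proof -
  let ?F = "\<lambda>m. (cmod (approx_unnorm N a \<epsilon> m))\<^sup>2"
  let ?g = "\<lambda>m::nat. 1 / fact (m - N) :: real"
  have "summable (\<lambda>n. ?g (n + N))" using summable_exp[of "1::real"] by (simp add: divide_inverse)
  then have "summable ?g" by (rule summable_iff_shift[THEN iffD1])
  then have gs: "?g summable_on UNIV" by (subst summable_on_UNIV_nonneg_real_iff) auto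
  have "infsum ?F {N<..} \<le> infsum (\<lambda>m. (\<epsilon>\<^sup>2) ^ (N+1) * ?g m) {N<..}"
  proof (rule infsum_mono)
    show "?F summable_on {N<..}" by (rule summable_on_subset[OF summable_F[OF assms(1)]]) auto
    show "(\<lambda>m. (\<epsilon>\<^sup>2) ^ (N+1) * ?g m) summable_on {N<..}"
      by (intro summable_on_cmult_right summable_on_subset[OF gs]) auto
  next
    fix m assume "m \<in> {N<..}"
    then have mN: "N < m" by simp
    define r where "r = m mod (N+1)"
    have rle: "r \<le> N" unfolding r_def using mod_less_divisor[of "N+1" m] by linarith
    have "m - r = (N+1) * (m div (N+1))" unfolding r_def by (simp add: minus_mod_eq_mult_div)
    moreover have "m div (N+1) \<ge> 1" using mN by (simp add: Suc_le_eq div_greater_zero_iff)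
    ultimately have mr: "N + 1 \<le> m - r" by (metis mult.right_neutral mult_le_mono2)
    have e2: "0 \<le> \<epsilon>\<^sup>2" "\<epsilon>\<^sup>2 \<le> 1" using assms(2) by (auto simp: abs_square_le_1)
    have a1: "(cmod (a r))\<^sup>2 \<le> 1" using rle normalized member_le_sum[of r "{..N}" "\<lambda>n. (cmod (a n))\<^sup>2"] by simp
    have "?F m = (\<epsilon>\<^sup>2) ^ m / (\<epsilon>\<^sup>2) ^ r * (fact r / fact m) * (cmod (a r))\<^sup>2"
      unfolding approx_sq[OF assms(1)] r_def[symmetric] by (simp add: field_simps)
    also have "(\<epsilon>\<^sup>2) ^ m / (\<epsilon>\<^sup>2) ^ r = (\<epsilon>\<^sup>2) ^ (m - r)"
      using assms(1) mr by (simp add: power_diff)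
    also have "(\<epsilon>\<^sup>2) ^ (m - r) * (fact r / fact m) * (cmod (a r))\<^sup>2 \<le> (\<epsilon>\<^sup>2) ^ (N+1) * ?g m * 1"
    proof (intro mult_mono)
      show "(\<epsilon>\<^sup>2) ^ (m - r) \<le> (\<epsilon>\<^sup>2) ^ (N+1)" using e2 mr by (intro power_decreasing) auto
      show "fact r / fact m \<le> ?g m" using fact_bound[OF rle mN] .
    qed (use a1 e2 in auto)
    finally show "?F m \<le> (\<epsilon>\<^sup>2) ^ (N+1) * ?g m" by simp
  qed
  also have "\<dots> = (\<epsilon>\<^sup>2) ^ (N+1) * infsum ?g {N<..}"
    by (rule infsum_cmult_right) (intro summable_on_subset[OF gs], auto)
  finally show ?thesis .
qed


theorem theorem1:
  fixes N :: nat and a :: "nat \<Rightarrow> complex"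
  assumes supp: "\<And>n. n > N \<Longrightarrow> a n = 0"
    and normalized: "(\<Sum>n\<le>N. (cmod (a n))\<^sup>2) = 1"
  shows "approx_coherent_rank a \<le> N + 1
    \<and> (\<lambda>\<epsilon>. normN N a \<epsilon> - 1) \<in> O[at 0](\<lambda>\<epsilon>. \<epsilon> ^ (2 * (N + 1)) / fact (N + 1))
    \<and> (\<forall>\<epsilon>. \<epsilon> \<noteq> 0 \<longrightarrow> fidelity a (approx_state N a \<epsilon>) = 1 / normN N a \<epsilon>)
    \<and> ((\<lambda>\<epsilon>. fidelity a (approx_state N a \<epsilon>)) \<longlongrightarrow> 1) (at 0)"
proof -
  define G where "G = infsum (\<lambda>m. 1 / fact (m - N) :: real) {N<..}"
  define T where "T \<epsilon> = infsum (\<lambda>m. (cmod (approx_unnorm N a \<epsilon> m))\<^sup>2) {N<..}" for \<epsilon>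
  have T0: "0 \<le> T \<epsilon>" for \<epsilon> unfolding T_def by (intro infsum_nonneg) simp
  have nN: "normN N a \<epsilon> = 1 + T \<epsilon>" if "\<epsilon> \<noteq> 0" for \<epsilon>
    unfolding T_def using norm_split[OF that normalized] .
  have Tb: "T \<epsilon> \<le> (\<epsilon>\<^sup>2) ^ (N+1) * G" if "\<epsilon> \<noteq> 0" "\<bar>\<epsilon>\<bar> \<le> 1" for \<epsilon>
    unfolding T_def G_def using tail_bound[OF that normalized] .
  have npos: "normN N a \<epsilon> > 0" if "\<epsilon> \<noteq> 0" for \<epsilon> using nN[OF that] T0[of \<epsilon>] by simp
  have ev: "eventually (\<lambda>\<epsilon>. \<epsilon> \<noteq> 0 \<and> \<bar>\<epsilon>\<bar> \<le> 1) (at (0::real))"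
    unfolding eventually_at by (intro exI[of _ 1]) auto
  have fid: "fidelity a (approx_state N a \<epsilon>) = 1 / normN N a \<epsilon>" if e: "\<epsilon> \<noteq> 0" for \<epsilon>
  proof -
    define s where "s = sqrt (normN N a \<epsilon>)"
    have s0: "s > 0" unfolding s_def using npos[OF e] by simp
    have "braket a (approx_state N a \<epsilon>) = infsum (\<lambda>n. cnj (a n) * (approx_unnorm N a \<epsilon> n / complex_of_real s)) UNIV"
      unfolding braket_def approx_state_def s_def ..
    also have "\<dots> = (\<Sum>n\<le>N. cnj (a n) * (a n / complex_of_real s))"
    proof -
      have "infsum (\<lambda>n. cnj (a n) * (approx_unnorm N a \<epsilon> n / complex_of_real s)) UNIV
          = infsum (\<lambda>n. cnj (a n) * (a n / complex_of_real s)) {..N}"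
        by (rule infsum_cong_neutral) (use supp approx_low[OF e] in \<open>auto simp: not_le\<close>)
      then show ?thesis by simp
    qed
    also have "\<dots> = (\<Sum>n\<le>N. complex_of_real ((cmod (a n))\<^sup>2)) / complex_of_real s"
    proof -
      have cn: "cnj (a n) * (a n / complex_of_real s) = complex_of_real ((cmod (a n))\<^sup>2) / complex_of_real s" for n
        by (metis complex_norm_square mult.commute times_divide_eq_right)
      show ?thesis unfolding cn sum_divide_distrib ..
    qed
    also have "\<dots> = 1 / complex_of_real s" unfolding of_real_sum[symmetric] normalized by simp
    finally have "braket a (approx_state N a \<epsilon>) = complex_of_real (1 / s)" by simp
    then have "fidelity a (approx_state N a \<epsilon>) = (1 / s)\<^sup>2" unfolding fidelity_def using s0 by (simp add: norm_divide)
    also have "\<dots> = 1 / normN N a \<epsilon>" unfolding s_def using npos[OF e] by (simp add: power_divide)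
    finally show ?thesis .
  qed
  have O: "(\<lambda>\<epsilon>. normN N a \<epsilon> - 1) \<in> O[at 0](\<lambda>\<epsilon>. \<epsilon> ^ (2 * (N + 1)) / fact (N + 1))"
  proof (rule bigoI[where c = "G * fact (N+1)"])
    show "\<forall>\<^sub>F \<epsilon> in at 0. norm (normN N a \<epsilon> - 1) \<le> G * fact (N + 1) * norm (\<epsilon> ^ (2 * (N + 1)) / fact (N + 1))"
      using ev
    proof eventually_elim
      case (elim \<epsilon>)
      have p: "\<epsilon> ^ (2 * (N + 1)) = (\<epsilon>\<^sup>2) ^ (N+1)" by (rule power_mult)
      have "norm (normN N a \<epsilon> - 1) = T \<epsilon>" using nN[of \<epsilon>] elim T0[of \<epsilon>] by simp
      also have "\<dots> \<le> (\<epsilon>\<^sup>2) ^ (N+1) * G" using Tb elim by simp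
      also have "\<dots> = G * fact (N + 1) * norm (\<epsilon> ^ (2 * (N + 1)) / fact (N + 1))"
        unfolding p by (simp add: abs_mult)
      finally show ?case .
    qed
  qed
  have lim_norm: "((\<lambda>\<epsilon>. normN N a \<epsilon>) \<longlongrightarrow> 1) (at (0::real))"
  proof (rule tendsto_sandwich[where f = "\<lambda>_. 1" and h = "\<lambda>\<epsilon>. 1 + (\<epsilon>\<^sup>2) ^ (N+1) * G"])
    show "\<forall>\<^sub>F \<epsilon> in at 0. 1 \<le> normN N a \<epsilon>" using ev by eventually_elim (use nN T0 in simp)
    show "\<forall>\<^sub>F \<epsilon> in at 0. normN N a \<epsilon> \<le> 1 + (\<epsilon>\<^sup>2) ^ (N+1) * G"
      using ev by eventually_elim (use nN Tb in simp)
    have "((\<lambda>\<epsilon>::real. 1 + (\<epsilon>\<^sup>2) ^ (N+1) * G) \<longlongrightarrow> 1 + ((0::real)\<^sup>2) ^ (N+1) * G) (at 0)"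
      by (intro tendsto_intros)
    then show "((\<lambda>\<epsilon>::real. 1 + (\<epsilon>\<^sup>2) ^ (N+1) * G) \<longlongrightarrow> 1) (at 0)" by simp
  qed simp
  have lim_fid: "((\<lambda>\<epsilon>. fidelity a (approx_state N a \<epsilon>)) \<longlongrightarrow> 1) (at 0)"
  proof -
    have "((\<lambda>\<epsilon>. 1 / normN N a \<epsilon>) \<longlongrightarrow> 1 / 1) (at 0)"
      by (intro tendsto_divide tendsto_const lim_norm) simp
    then have L: "((\<lambda>\<epsilon>. 1 / normN N a \<epsilon>) \<longlongrightarrow> 1) (at 0)" by simp
    have E: "eventually (\<lambda>\<epsilon>. fidelity a (approx_state N a \<epsilon>) = 1 / normN N a \<epsilon>) (at (0::real))"
      using ev by eventually_elim (use fid in simp)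
    show ?thesis using L unfolding tendsto_cong[OF E] .
  qed
  have rank: "approx_coherent_rank a \<le> N + 1"
    unfolding approx_coherent_rank_def
  proof (rule Least_le, intro allI impI)
    fix \<delta> :: real assume d: "\<delta> > 0"
    have "eventually (\<lambda>\<epsilon>. fidelity a (approx_state N a \<epsilon>) > 1 - \<delta>) (at (0::real))"
      using order_tendstoD(1)[OF lim_fid] d by simp
    then have "eventually (\<lambda>\<epsilon>. fidelity a (approx_state N a \<epsilon>) > 1 - \<delta> \<and> \<epsilon> \<noteq> 0) (at (0::real))"
      using ev by eventually_elim simp
    then obtain \<epsilon> :: real where e: "fidelity a (approx_state N a \<epsilon>) > 1 - \<delta>" "\<epsilon> \<noteq> 0"
      using eventually_happens[of _ "at (0::real)"] trivial_limit_at[of "0::real"] by auto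
    define s where "s = sqrt (normN N a \<epsilon>)"
    have s0: "s > 0" unfolding s_def using npos[OF e(2)] by simp
    have s2: "s\<^sup>2 = normN N a \<epsilon>" unfolding s_def using npos[OF e(2)] by simp
    have hr: "has_coherent_rank (N + 1) (approx_state N a \<epsilon>)"
      unfolding has_coherent_rank_def
    proof (intro exI ext)
      fix m
      show "approx_state N a \<epsilon> m = (\<Sum>i<N+1. (coeff_c N a \<epsilon> i / complex_of_real s) *
           coherent (complex_of_real \<epsilon> * exp (2 * pi * \<i> * of_nat i / of_nat (N + 1))) m)"
      proof -
        have I: "{..<N+1} = {..N}" by auto
        show ?thesis unfolding approx_state_def approx_unnorm_def s_def[symmetric] I sum_divide_distrib
          by (intro sum.cong refl) (simp only: times_divide_eq_left)
      qed
    qed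
    let ?F = "\<lambda>m. (cmod (approx_unnorm N a \<epsilon> m))\<^sup>2"
    have sq: "(cmod (approx_state N a \<epsilon> m))\<^sup>2 = ?F m * inverse (normN N a \<epsilon>)" for m
    proof -
      have "(cmod (approx_unnorm N a \<epsilon> m / complex_of_real s))\<^sup>2 = ?F m / s\<^sup>2"
        using s0 by (simp add: norm_divide power_divide)
      then show ?thesis unfolding approx_state_def s_def[symmetric] s2 by (simp add: divide_inverse)
    qed
    have "(\<lambda>m. ?F m * inverse (normN N a \<epsilon>)) summable_on UNIV"
      by (intro summable_on_cmult_left summable_F e(2))
    moreover have "infsum (\<lambda>m. ?F m * inverse (normN N a \<epsilon>)) UNIV = 1"
      using npos[OF e(2)] by (subst infsum_cmult_left) (auto simp: normN_def sqnorm_def intro: summable_F[OF e(2)])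
    ultimately have "is_state (approx_state N a \<epsilon>)"
      unfolding is_state_def sqnorm_def sq by simp
    with hr e(1) show "\<exists>\<phi>. has_coherent_rank (N + 1) \<phi> \<and> is_state \<phi> \<and> 1 - \<delta> < fidelity a \<phi>" by blast
  qed
  show ?thesis using rank O fid lim_fid by blast
qed

end
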